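(* Let $p\in(1,\infty)$. Define $F_p:\mathbb{C}\to\mathbb{C}$ by $F_p(z)=z\,|z|^{p-2}$ for $z\neq 0$ and $F_p(0)=0$. Let $\varphi_p:=\arcsin|1-\tfrac{2}{p}|$ and \[ \Sigma_p:=\{z\in\mathbb{C}\setminus\{0\}: |\arg z|\le \varphi_p\}\cup\{0\}. \] Then \[ \overline{\{(w-z)\cdot\overline{(F_p(w)-F_p(z))} : z,w\in\mathbb{C}\}}=\Sigma_p, \] where the bar over the set denotes the closure in $\mathbb{C}$ and the bar over $F_p(w)-F_p(z)$ denotes complex conjugation.
   Context: $\arg$ denotes the principal argument, with values in $(-\pi,\pi]$. *)

theory Defs
  imports "HOL-Complex_Analysis.Complex_Analysis"
begin

definition F :: "real \<Rightarrow> complex \<Rightarrow> complex" where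
  "F p z = (if z = 0 then 0 else z * complex_of_real (norm z powr (p - 2)))"

definition phi :: "real \<Rightarrow> real" where
  "phi p = arcsin \<bar>1 - 2 / p\<bar>"

definition Sigma_p :: "real \<Rightarrow> complex set" where
  "Sigma_p p = {z. z \<noteq> 0 \<and> \<bar>Arg z\<bar> \<le> phi p} \<union> {0}"

end

theory Submission
  imports Defs
begin

definition gg :: "real \<Rightarrow> real \<Rightarrow> real" where
 "gg c t = (c-1)^2 * (cosh((c+1)* t) - cosh((c-1)* t)) - 4* c*(cosh((c-1)* t) - 1)"

definition gd :: "real \<Rightarrow> real \<Rightarrow> real" where
 "gd c t = (c-1)^2 * ((c+1)* sinh((c+1)* t) - (c-1)* sinh((c-1)* t)) - 4* c*(c-1)* sinh((c-1)* t)"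

lemma gg_deriv: "DERIV (gg c) t :> gd c t"
  unfolding gg_def gd_def
  by (auto intro!: derivative_eq_intros simp: algebra_simps)

lemma gd_deriv: "DERIV (gd c) t :> (c-1)^2*(c+1)^2*(cosh((c+1)* t) - cosh((c-1)* t))"
  unfolding gd_def
  by (auto intro!: derivative_eq_intros simp: algebra_simps power2_eq_square)

lemma cosh_cmp: fixes c t :: real assumes "c > 0" "t \<ge> 0" shows "cosh((c-1)* t) \<le> cosh((c+1)* t)"
proof -
  have "cosh((c-1)* t) = cosh(\<bar>(c-1)* t\<bar>)" by simp
  also have "\<dots> \<le> cosh((c+1)* t)"
    using assms by (subst cosh_real_nonneg_le_iff) (auto simp: abs_mult intro!: mult_right_mono)
  finally show ?thesis .
qed

lemma gd_nonneg: assumes "c > 0" "t \<ge> 0" shows "gd c t \<ge> 0"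
proof -
  have "gd c 0 \<le> gd c t"
  proof (rule DERIV_nonneg_imp_nondecreasing[OF assms(2)])
    fix x assume x: "0 \<le> x" "x \<le> t"
    show "\<exists>y. DERIV (gd c) x :> y \<and> y \<ge> 0"
    proof (intro exI conjI)
      show "DERIV (gd c) x :> (c-1)^2 * (c+1)^2 * (cosh((c+1) * x) - cosh((c-1) * x))"
        by (rule gd_deriv)
      show "0 \<le> (c-1)^2 * (c+1)^2 * (cosh((c+1) * x) - cosh((c-1) * x))"
        using cosh_cmp[OF assms(1) x(1)] by simp
    qed
  qed
  then show ?thesis by (simp add: gd_def)
qed

lemma gg_nonneg0: assumes "c > 0" "t \<ge> 0" shows "gg c t \<ge> 0"
proof -
  have "gg c 0 \<le> gg c t"
  proof (rule DERIV_nonneg_imp_nondecreasing[OF assms(2)])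
    fix x assume x: "0 \<le> x" "x \<le> t"
    show "\<exists>y. DERIV (gg c) x :> y \<and> y \<ge> 0"
      using gg_deriv[of c x] gd_nonneg[OF assms(1) x(1)] by blast
  qed
  then show ?thesis by (simp add: gg_def)
qed

lemma gg_nonneg: assumes "c > 0" shows "gg c t \<ge> 0"
proof (cases "t \<ge> 0")
  case True thus ?thesis using gg_nonneg0 assms by blast
next
  case False
  have "gg c t = gg c (-t)" unfolding gg_def by simp
  thus ?thesis using gg_nonneg0[OF assms, of "-t"] False by simp
qed

lemma scalar_exp: fixes c t :: real assumes "c > 0"
  shows "4* c*(exp(c* t) - exp t)^2 \<le> (c-1)^2*(exp(c* t)^2 - 1)*(exp t^2 - 1)"
proof -
  define a where "a = exp(c* t)"
  define b where "b = exp t"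
  have a: "a > 0" and b: "b > 0" by (auto simp: a_def b_def)
  have e1: "exp((c+1)* t) = a* b" by (simp add: a_def b_def distrib_right exp_add)
  have e2: "exp(-((c+1)* t)) = 1/(a* b)" by (simp only: exp_minus e1 inverse_eq_divide)
  have e3: "exp((c-1)* t) = a/b" by (simp add: a_def b_def left_diff_distrib exp_diff)
  have e4: "exp(-((c-1)* t)) = b/a" by (simp add: e3 exp_minus)
  have h1: "2*(a* b)* cosh((c+1)* t) = (a* b)^2 + 1"
    unfolding cosh_def e1 e2 using a b by (simp add: field_simps power2_eq_square)
  have h2: "2*(a* b)* cosh((c-1)* t) = a^2 + b^2"
    unfolding cosh_def e3 e4 using a b by (simp add: field_simps power2_eq_square)
  have "2*(a* b)* gg c t = (c-1)^2*(2*(a* b)* cosh((c+1)* t) - 2*(a* b)* cosh((c-1)* t))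
      - 4* c*(2*(a* b)* cosh((c-1)* t) - 2*(a* b))"
    by (simp add: gg_def algebra_simps)
  also have "\<dots> = (c-1)^2*(a^2 - 1)*(b^2 - 1) - 4* c*(a - b)^2"
    unfolding h1 h2 by algebra
  finally have eq: "(c-1)^2*(a^2 - 1)*(b^2 - 1) - 4* c*(a - b)^2 = 2*(a* b)* gg c t" by simp
  moreover have "2*(a* b)* gg c t \<ge> 0" using a b gg_nonneg[OF assms] by simp
  ultimately show ?thesis unfolding a_def b_def by linarith
qed

lemma scalar_r: fixes p r :: real assumes p: "p > 1" and r: "r > 0"
  shows "4*(p-1)*(r powr (p-1) - r)^2 \<le> (p-2)^2*((r powr (p-1))^2 - 1)*(r^2 - 1)"
proof -
  have "4*(p-1)*(exp((p-1)* ln r) - exp (ln r))^2 \<le> ((p-1)-1)^2*(exp((p-1)* ln r)^2 - 1)*(exp (ln r)^2 - 1)"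
    using scalar_exp[of "p-1" "ln r"] p by simp
  moreover have "exp((p-1)* ln r) = r powr (p-1)" using r by (simp add: powr_def)
  moreover have "exp (ln r) = r" using r by simp
  ultimately show ?thesis by (simp add: algebra_simps)
qed

definition good :: "real \<Rightarrow> complex \<Rightarrow> bool" where
  "good p v \<longleftrightarrow> 0 \<le> Re v \<and> 4*(p-1)*(Im v)^2 \<le> (p-2)^2*(Re v)^2"

lemma F_alt: "F p z = z * of_real (cmod z powr (p-2))"
  by (simp add: F_def)

lemma F_mult: "F p (a* b) = F p a * F p b"
proof -
  have "cmod (a* b) powr (p-2) = cmod a powr (p-2) * cmod b powr (p-2)"
    by (simp add: norm_mult powr_mult)
  then show ?thesis unfolding F_alt by (simp add: mult_ac)
qed

lemma F_cnj: "z * cnj (F p z) = of_real ((cmod z)^2 * cmod z powr (p-2))"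
proof -
  have "z * cnj (F p z) = (z * cnj z) * of_real (cmod z powr (p-2))"
    by (simp add: F_alt mult_ac)
  also have "z * cnj z = of_real ((cmod z)^2)" by (rule complex_norm_square[symmetric])
  finally show ?thesis by simp
qed

lemma F_one[simp]: "F p 1 = 1"
  by (simp add: F_def)

lemma good_scale: assumes "0 \<le> k" "good p v" shows "good p (of_real k * v)"
proof -
  have "k^2 * (4*(p-1)*(Im v)^2) \<le> k^2 * ((p-2)^2*(Re v)^2)"
    using assms(2) unfolding good_def by (intro mult_left_mono) auto
  then show ?thesis using assms unfolding good_def
    by (simp add: power_mult_distrib mult_ac)
qed

lemma good_real: assumes "0 \<le> k" shows "good p (of_real k)"
  using assms unfolding good_def by simp

lemma good_v0: fixes p :: real and u :: complex assumes p: "p > 1"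
  shows "good p ((u - 1) * cnj (F p u - 1))"
proof -
  define x where "x = Re u"
  define y where "y = Im u"
  define r where "r = cmod u"
  define q where "q = r powr (p-2)"
  define S where "S = r^2"
  have S: "S = x^2 + y^2" unfolding S_def x_def y_def r_def by (rule cmod_power2)
  have q0: "q \<ge> 0" by (simp add: q_def)
  have r0: "r \<ge> 0" by (simp add: r_def)
  have xr: "x \<le> r" unfolding x_def r_def by (rule complex_Re_le_cmod)
  have Fu: "F p u = u * of_real q" by (simp add: F_alt q_def r_def)
  define R where "R = q*S + 1 - (1+q)* x"
  have ReV0: "Re ((u - 1) * cnj (u * of_real q - 1)) = q*((Re u)^2 + (Im u)^2) + 1 - (1+q)*Re u"
    by (simp add: algebra_simps power2_eq_square)
  have ReV: "Re ((u - 1) * cnj (F p u - 1)) = R"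
    unfolding Fu ReV0 R_def S x_def y_def by simp
  have ImV: "Im ((u - 1) * cnj (F p u - 1)) = (q-1)* y"
    unfolding Fu y_def x_def by (simp add: algebra_simps)
  have qr: "q* r = r powr (p-1)" if "r > 0"
  proof -
    have "r powr (p-1) = r * r powr (p-2)" using powr_mult_base[of r "p-2"] that by simp
    then show ?thesis by (simp add: q_def mult_ac)
  qed
  have R0: "R \<ge> 0"
  proof -
    have "R \<ge> q*S + 1 - (1+q)* r" unfolding R_def using xr q0 by (simp add: mult_left_mono)
    moreover have "q*S + 1 - (1+q)* r = (q* r - 1)*(r-1)" unfolding S_def by (simp add: algebra_simps power2_eq_square)
    moreover have "(q* r - 1)*(r-1) \<ge> 0"
    proof (cases "r = 0")
      case True thus ?thesis by simp
    next
      case False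
      hence rp: "r > 0" using r0 by simp
      show ?thesis
      proof (cases "r \<ge> 1")
        case True
        have "1 \<le> r powr (p-1)" using True p by (intro ge_one_powr_ge_zero) auto
        thus ?thesis using True qr[OF rp] by simp
      next
        case False
        have "r powr (p-1) \<le> 1 powr (p-1)" using False p r0 by (intro powr_mono2) auto
        thus ?thesis using False qr[OF rp] by (simp add: mult_nonpos_nonpos)
      qed
    qed
    ultimately show ?thesis by linarith
  qed
  have ineq: "4*(p-1)*((q-1)* y)^2 \<le> (p-2)^2*R^2"
  proof (cases "y = 0")
    case True thus ?thesis by simp
  next
    case False
    hence Sp: "S > 0" unfolding S by (simp add: add_nonneg_pos)
    hence rp: "r > 0" unfolding S_def using r0 by (cases "r = 0") auto
    define A where "A = q*S + 1"
    have iden: "S*R^2 = ((q^2*S - 1)*(S - 1))* y^2 + (A* x - (1+q)*S)^2"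
    proof -
      have y2: "y^2 = S - x^2" using S by simp
      show ?thesis unfolding y2 R_def A_def by algebra
    qed
    have sc: "4*(p-1)*(q-1)^2*S \<le> (p-2)^2*(q^2*S - 1)*(S - 1)"
    proof -
      have "(r powr (p-1) - r)^2 = (q-1)^2*S" unfolding qr[OF rp, symmetric] S_def
        by (simp add: algebra_simps power2_eq_square)
      moreover have "(r powr (p-1))^2 = q^2*S" unfolding qr[OF rp, symmetric] S_def
        by (simp add: algebra_simps power2_eq_square)
      ultimately show ?thesis using scalar_r[OF p rp] unfolding S_def by (simp add: mult_ac)
    qed
    have "S*(4*(p-1)*((q-1)* y)^2) = (4*(p-1)*(q-1)^2*S)* y^2"
      by (simp add: power_mult_distrib mult_ac)
    also have "\<dots> \<le> ((p-2)^2*(q^2*S - 1)*(S - 1))* y^2"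
      using sc by (intro mult_right_mono) auto
    also have "\<dots> = (p-2)^2*(((q^2*S - 1)*(S - 1))* y^2)" by (simp add: mult_ac)
    also have "\<dots> \<le> (p-2)^2*(S*R^2)"
      unfolding iden by (intro mult_left_mono) auto
    also have "\<dots> = S*((p-2)^2*R^2)" by (simp add: mult_ac)
    finally show ?thesis using Sp by (simp add: mult_le_cancel_left_pos)
  qed
  show ?thesis unfolding good_def ReV ImV using R0 ineq by simp
qed

lemma good_all: assumes p: "p > 1" shows "good p ((w - z) * cnj (F p w - F p z))"
proof (cases "z = 0")
  case True
  have "(w - z) * cnj (F p w - F p z) = of_real ((cmod w)^2 * cmod w powr (p-2))"
    using True F_cnj[of w p] by (simp add: F_def)
  thus ?thesis by (simp only:) (rule good_real, simp)
next
  case False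
  define u where "u = w / z"
  have w: "w = u * z" using False by (simp add: u_def)
  have "(w - z) * cnj (F p w - F p z) = (z * cnj (F p z)) * ((u - 1) * cnj (F p u - 1))"
    unfolding w F_mult by (simp add: algebra_simps)
  also have "z * cnj (F p z) = of_real ((cmod z)^2 * cmod z powr (p-2))"
    by (rule F_cnj)
  finally have eq: "(w - z) * cnj (F p w - F p z) = of_real ((cmod z)^2 * cmod z powr (p-2)) * ((u - 1) * cnj (F p u - 1))" .
  show ?thesis unfolding eq by (rule good_scale) (simp, rule good_v0[OF p])
qed

lemma Sigma_char: assumes p: "p > 1" shows "z \<in> Sigma_p p \<longleftrightarrow> good p z"
proof (cases "z = 0")
  case True thus ?thesis by (simp add: Sigma_p_def good_def)
next
  case False
  define a where "a = Arg z"
  define n where "n = cmod z"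
  define s where "s = \<bar>1 - 2/p\<bar>"
  have np: "n > 0" using False by (simp add: n_def)
  have e: "z = of_real n * exp(\<i> * of_real a)" using Arg_eq[OF False] by (simp add: n_def a_def)
  have Rez: "Re z = n * cos a" by (subst e) (simp add: Re_exp)
  have Imz: "Im z = n * sin a" by (subst e) (simp add: Im_exp)
  have ab: "-pi < a" "a \<le> pi" using mpi_less_Arg Arg_le_pi by (auto simp: a_def)
  have s0: "0 \<le> s" "s < 1"
  proof -
    show "0 \<le> s" by (simp add: s_def)
    have "2/p > 0" "2/p < 2" using p by (auto simp: field_simps)
    thus "s < 1" by (simp add: s_def abs_less_iff)
  qed
  have as: "arcsin s \<le> pi/2" "0 \<le> arcsin s" using s0 arcsin_bounded[of s] arcsin_le_arcsin[of 0 s] by auto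
  have sinabs: "sin \<bar>a\<bar> = \<bar>sin a\<bar>"
  proof (cases "a \<ge> 0")
    case True thus ?thesis using sin_ge_zero[of a] ab by simp
  next
    case False thus ?thesis using sin_ge_zero[of "-a"] ab by simp
  qed
  have key: "\<bar>a\<bar> \<le> arcsin s \<longleftrightarrow> (0 \<le> cos a \<and> \<bar>sin a\<bar> \<le> s)"
  proof
    assume h: "\<bar>a\<bar> \<le> arcsin s"
    have "0 \<le> cos a" using h as by (intro cos_ge_zero) auto
    moreover have "sin \<bar>a\<bar> \<le> sin (arcsin s)" using h as by (intro sin_monotone_2pi_le) auto
    ultimately show "0 \<le> cos a \<and> \<bar>sin a\<bar> \<le> s" using s0 sinabs by (simp add: sin_arcsin)
  next
    assume h: "0 \<le> cos a \<and> \<bar>sin a\<bar> \<le> s"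
    have a2: "\<bar>a\<bar> \<le> pi/2"
    proof (rule ccontr)
      assume "\<not> \<bar>a\<bar> \<le> pi/2"
      hence "cos \<bar>a\<bar> < 0" using ab by (intro cos_lt_zero_pi) auto
      thus False using h by simp
    qed
    have "\<bar>a\<bar> = arcsin (sin \<bar>a\<bar>)" using a2 by (simp add: arcsin_sin)
    also have "\<dots> \<le> arcsin s" using h sinabs s0 sin_ge_minus_one[of "\<bar>a\<bar>"]
      by (intro arcsin_le_arcsin) auto
    finally show "\<bar>a\<bar> \<le> arcsin s" .
  qed
  have g1: "good p z \<longleftrightarrow> (0 \<le> cos a \<and> 4*(p-1)*(sin a)^2 \<le> (p-2)^2*(cos a)^2)"
  proof -
    have i1: "4*(p-1)*(Im z)^2 = n^2 * (4*(p-1)*(sin a)^2)" by (simp add: Imz power_mult_distrib)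
    have i2: "(p-2)^2*(Re z)^2 = n^2 * ((p-2)^2*(cos a)^2)" by (simp add: Rez power_mult_distrib)
    have i3: "(0 \<le> Re z) = (0 \<le> cos a)" using np by (simp add: Rez zero_le_mult_iff)
    have n2: "n^2 > 0" using np by simp
    show ?thesis unfolding good_def i1 i2 i3 by (simp only: mult_le_cancel_left_pos[OF n2])
  qed
  have g2: "4*(p-1)*(sin a)^2 \<le> (p-2)^2*(cos a)^2 \<longleftrightarrow> \<bar>sin a\<bar> \<le> s"
  proof -
    have c2: "(cos a)^2 = 1 - (sin a)^2" by (simp add: cos_squared_eq)
    have "(p-2)^2*(cos a)^2 - 4*(p-1)*(sin a)^2 = (p-2)^2 - p^2*(sin a)^2"
      unfolding c2 by algebra
    hence "4*(p-1)*(sin a)^2 \<le> (p-2)^2*(cos a)^2 \<longleftrightarrow> (sin a)^2 * p^2 \<le> (p-2)^2" by (auto simp: mult_ac)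
    also have "\<dots> \<longleftrightarrow> (sin a)^2 \<le> (p-2)^2/p^2" using p by (simp add: pos_le_divide_eq)
    also have "(p-2)^2/p^2 = s^2"
    proof -
      have e1: "(p-2)/p = 1 - 2/p" using p by (simp add: field_simps)
      have "(p-2)^2/p^2 = ((p-2)/p)^2" by (rule power_divide[symmetric])
      also have "\<dots> = (1 - 2/p)^2" by (simp only: e1)
      also have "\<dots> = s^2" by (simp add: s_def)
      finally show ?thesis .
    qed
    also have "(sin a)^2 \<le> s^2 \<longleftrightarrow> \<bar>sin a\<bar> \<le> \<bar>s\<bar>" by (simp add: abs_le_square_iff)
    finally show ?thesis using s0 by simp
  qed
  have "z \<in> Sigma_p p \<longleftrightarrow> \<bar>a\<bar> \<le> arcsin s" using False by (simp add: Sigma_p_def phi_def a_def s_def)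
  then show ?thesis using g1 g2 key by blast
qed

lemma F_scale: assumes "c > 0" shows "F p (of_real c * z) = of_real (c powr (p-1)) * F p z"
proof -
  have "c powr (p-1) = c * c powr (p-2)" using powr_mult_base[of c "p-2"] assms by simp
  thus ?thesis using assms unfolding F_mult by (simp add: F_alt)
qed

lemma v_scale: assumes "c > 0"
  shows "(of_real c * w - of_real c * z) * cnj (F p (of_real c * w) - F p (of_real c * z))
    = of_real (c powr p) * ((w - z) * cnj (F p w - F p z))"
proof -
  have cp: "c powr p = c * c powr (p-1)" using powr_mult_base[of c "p-1"] assms by simp
  show ?thesis unfolding F_scale[OF assms] cp by (simp add: algebra_simps)
qed

lemma approx: assumes p: "p > 1" and g: "good p \<zeta>" and nz: "\<zeta> \<noteq> 0"
  shows "\<zeta> \<in> closure {(w - z) * cnj (F p w - F p z) | z w. True}"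
proof -
  define a where "a = Re \<zeta>"
  define b where "b = Im \<zeta>"
  have a0: "a \<ge> 0" and gi: "4*(p-1)* b^2 \<le> (p-2)^2* a^2" using g by (auto simp: good_def a_def b_def)
  have ap: "a > 0"
  proof (rule ccontr)
    assume "\<not> a > 0"
    hence a: "a = 0" using a0 by simp
    have "4*(p-1)* b^2 \<le> 0" using gi a by simp
    moreover have "4*(p-1)* b^2 \<ge> 0" using p by simp
    ultimately have "4*(p-1)* b^2 = 0" by linarith
    hence "b = 0" using p by simp
    thus False using a nz by (simp add: complex_eq_iff a_def b_def)
  qed
  define D where "D = (p-2)^2* a^2 - 4*(p-1)* b^2"
  have D0: "D \<ge> 0" using gi by (simp add: D_def)
  define s where "s = (if b = 0 then 0 else ((p-2)* a + sqrt D)/(2* b))"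
  have seq: "a* s*(p-2) = b*(p-1+s^2)"
  proof (cases "b = 0")
    case True thus ?thesis by (simp add: s_def)
  next
    case False
    define e where "e = sqrt D"
    have e2: "e^2 = D" using D0 by (simp add: e_def)
    have hs: "2* b* s = (p-2)* a + e" using False by (simp add: s_def e_def)
    have "4* b*(b* s^2 - (p-2)* a* s + b*(p-1)) = (2* b* s)^2 - 2*((p-2)* a)*(2* b* s) + 4* b^2*(p-1)"
      by algebra
    also have "\<dots> = ((p-2)* a + e)^2 - 2*((p-2)* a)*((p-2)* a + e) + 4* b^2*(p-1)" by (simp only: hs)
    also have "\<dots> = e^2 - ((p-2)* a)^2 + 4* b^2*(p-1)" by algebra
    also have "\<dots> = D - ((p-2)*a)^2 + 4*b^2*(p-1)" by (simp add: e2)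
    also have "\<dots> = 0" unfolding D_def by algebra
    finally have z0: "b* s^2 - (p-2)* a* s + b*(p-1) = 0" using False by simp
    have "b*(p-1+s^2) - a* s*(p-2) = b* s^2 - (p-2)* a* s + b*(p-1)" by algebra
    thus ?thesis using z0 by simp
  qed
  define N where "N = p - 1 + s^2"
  have Np: "N > 0" using p by (simp add: N_def add_pos_nonneg)
  define lam where "lam = a / N"
  have lp: "lam > 0" using ap Np by (simp add: lam_def)
  define h where "h = Complex 1 s"
  define c where "c = of_real lam * h * cnj (h + of_real (p-2))"
  have hh: "h * cnj (h + of_real (p-2)) = Complex N (s*(p-2))"
    by (simp add: h_def N_def complex_eq_iff algebra_simps power2_eq_square)
  have c: "c = \<zeta>"
  proof -
    have "Re c = Re (of_real lam * (h * cnj (h + of_real (p-2))))" by (simp only: c_def mult.assoc)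
    also have "\<dots> = lam * N" unfolding hh by simp
    also have "\<dots> = a" using Np by (simp add: lam_def)
    finally have 1: "Re c = Re \<zeta>" by (simp add: a_def)
    have "Im c = Im (of_real lam * (h * cnj (h + of_real (p-2))))" by (simp only: c_def mult.assoc)
    also have "\<dots> = lam * (s*(p-2))" unfolding hh by simp
    also have "\<dots> = a* s*(p-2)/N" by (simp add: lam_def)
    also have "\<dots> = b" using Np by (simp add: seq N_def)
    finally have 2: "Im c = Im \<zeta>" by (simp add: b_def)
    show ?thesis using 1 2 by (simp add: complex_eq_iff)
  qed
  define ph where "ph e = ((1+e)^2 + (e* s)^2) powr ((p-2)/2)" for e :: real
  have Fe: "F p (1 + of_real e * h) = (1 + of_real e * h) * of_real (ph e)" for e
  proof -
    have m2: "(cmod (1 + of_real e * h))^2 = (1+e)^2 + (e* s)^2" by (simp add: cmod_power2 h_def)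
    have "cmod (1 + of_real e * h) powr (p-2) = (cmod (1 + of_real e * h) powr 2) powr ((p-2)/2)"
    proof -
      have t: "2 * ((p-2)/2) = p - (2::real)" by simp
      show ?thesis by (simp only: powr_powr t)
    qed
    also have "\<dots> = ph e" by (simp add: m2 ph_def)
    finally show ?thesis by (simp add: F_alt)
  qed
  have dg: "DERIV (\<lambda>e. (1+e)^2 + (e* s)^2) 0 :> 2"
    by (auto intro!: derivative_eq_intros)
  have phl: "ph = (\<lambda>e. ((1+e)^2 + (e * s)^2) powr ((p-2)/2))" by (simp add: ph_def fun_eq_iff)
  have dph: "DERIV ph 0 :> (p-2)"
  proof -
    have "DERIV ph 0 :> (p-2)/2 * ((1+0)^2 + (0 * s)^2) powr ((p-2)/2 - of_nat 1) * 2"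
      unfolding phl by (rule DERIV_fun_powr[OF dg]) simp
    moreover have "(p-2)/2 * ((1+0)^2 + (0 * s)^2) powr ((p-2)/2 - of_nat 1) * 2 = p - (2::real)" by simp
    ultimately show ?thesis by (simp only:)
  qed
  have ph0: "ph 0 = 1" by (simp add: ph_def)
  define ep where "ep n = inverse (real (Suc n))" for n
  have ep0: "ep n \<noteq> 0" for n by (simp add: ep_def)
  have epL: "ep \<longlonglongrightarrow> 0" unfolding ep_def[abs_def] by (rule LIMSEQ_inverse_real_of_nat)
  have epat: "filterlim ep (at 0) sequentially"
    using epL ep0 by (simp add: filterlim_at)
  define Q where "Q n = (ph (ep n) - 1) / ep n" for n
  have QL: "Q \<longlonglongrightarrow> (p-2)"
  proof -
    have "((\<lambda>e. (ph (0 + e) - ph 0) / e) \<longlongrightarrow> (p-2)) (at 0)" using dph by (simp add: DERIV_def)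
    from filterlim_compose[OF this epat] show ?thesis by (simp add: Q_def[abs_def] ph0)
  qed
  have phQ: "ph (ep n) = 1 + ep n * Q n" for n using ep0[of n] by (simp add: Q_def)
  have phL: "(\<lambda>n. ph (ep n)) \<longlonglongrightarrow> 1"
  proof -
    have "(\<lambda>n. 1 + ep n * Q n) \<longlonglongrightarrow> 1 + 0 * (p-2)" by (intro tendsto_intros epL QL)
    thus ?thesis by (simp add: phQ)
  qed
  define X where "X n = of_real lam * h * cnj (h * of_real (ph (ep n)) + of_real (Q n))" for n
  have XL: "X \<longlonglongrightarrow> c"
  proof -
    have "X \<longlonglongrightarrow> of_real lam * h * cnj (h * of_real 1 + of_real (p-2))"
      unfolding X_def[abs_def] by (intro tendsto_intros phL QL)
    thus ?thesis by (simp add: c_def)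
  qed
  have XV: "X n \<in> {(w - z) * cnj (F p w - F p z) | z w. True}" for n
  proof -
    define e where "e = ep n"
    have e0: "e \<noteq> 0" using ep0 by (simp add: e_def)
    define K where "K = lam / e^2"
    have Kp: "K > 0" using lp e0 by (simp add: K_def)
    define cc where "cc = K powr (1/p)"
    have ccp: "cc > 0" using Kp by (simp add: cc_def)
    have ccK: "cc powr p = K" using Kp p by (simp add: cc_def powr_powr powr_one)
    have "F p (1 + of_real e * h) - 1 = of_real e * (h * of_real (ph e) + of_real (Q n))"
      unfolding Fe using phQ[of n] by (simp add: e_def algebra_simps)
    hence "((1 + of_real e * h) - 1) * cnj (F p (1 + of_real e * h) - F p 1)
        = of_real (e* e) * (h * cnj (h * of_real (ph e) + of_real (Q n)))"
      by (simp add: algebra_simps)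
    hence "(of_real cc * (1 + of_real e * h) - of_real cc * 1) *
        cnj (F p (of_real cc * (1 + of_real e * h)) - F p (of_real cc * 1))
        = of_real (K * (e* e)) * (h * cnj (h * of_real (ph e) + of_real (Q n)))"
      unfolding v_scale[OF ccp] ccK by simp
    also have "K * (e* e) = lam" using e0 by (simp add: K_def power2_eq_square)
    finally have eqX: "X n = (of_real cc * (1 + of_real e * h) - of_real cc * 1) *
        cnj (F p (of_real cc * (1 + of_real e * h)) - F p (of_real cc * 1))"
      by (simp add: X_def e_def mult_ac)
    show ?thesis unfolding eqX
      by (rule CollectI, rule exI[of _ "of_real cc * 1"], rule exI[of _ "of_real cc * (1 + of_real e * h)"]) simp
  qed
  have "c \<in> closure {(w - z) * cnj (F p w - F p z) | z w. True}"
    unfolding closure_sequential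
  proof (intro exI conjI allI)
    show "X n \<in> {(w - z) * cnj (F p w - F p z) | z w. True}" for n by (rule XV)
    show "X \<longlonglongrightarrow> c" by (rule XL)
  qed
  thus ?thesis using c by simp
qed

theorem lemma2:
  fixes p :: real
  assumes "1 < p"
  shows "closure {(w - z) * cnj (F p w - F p z) | z w. True} = Sigma_p p"
proof -
  let ?V = "{(w - z) * cnj (F p w - F p z) | z w. True}"
  have SG: "Sigma_p p = {v. good p v}" by (rule set_eqI) (simp add: Sigma_char[OF assms])
  have c0: "continuous_on UNIV (\<lambda>v::complex. v)" by (rule continuous_on_id)
  have cR: "continuous_on UNIV (\<lambda>v::complex. Re v)" using continuous_on_Re[OF c0] .
  have cI: "continuous_on UNIV (\<lambda>v::complex. Im v)" using continuous_on_Im[OF c0] .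
  have cl1: "closed {v::complex. 0 \<le> Re v}" using closed_Collect_le[OF continuous_on_const cR] .
  have cA: "continuous_on UNIV (\<lambda>v::complex. 4*(p-1)*(Im v)^2)"
    by (rule continuous_on_mult[OF continuous_on_const continuous_on_power[OF cI]])
  have cB: "continuous_on UNIV (\<lambda>v::complex. (p-2)^2*(Re v)^2)"
    by (rule continuous_on_mult[OF continuous_on_const continuous_on_power[OF cR]])
  have cl2: "closed {v::complex. 4*(p-1)*(Im v)^2 \<le> (p-2)^2*(Re v)^2}"
    using closed_Collect_le[OF cA cB] .
  have eqG: "{v. good p v} = {v::complex. 0 \<le> Re v} \<inter> {v::complex. 4*(p-1)*(Im v)^2 \<le> (p-2)^2*(Re v)^2}"
    unfolding good_def Collect_conj_eq by (rule refl)
  have cl: "closed {v. good p v}" unfolding eqG using cl1 cl2 by (rule closed_Int)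
  have sub: "?V \<subseteq> {v. good p v}"
  proof
    fix v assume "v \<in> ?V"
    then obtain z w where "v = (w - z) * cnj (F p w - F p z)" by blast
    thus "v \<in> {v. good p v}" using good_all[OF assms, of w z] by simp
  qed
  have 1: "closure ?V \<subseteq> Sigma_p p" unfolding SG by (rule closure_minimal[OF sub cl])
  have 2: "Sigma_p p \<subseteq> closure ?V"
  proof
    fix v assume "v \<in> Sigma_p p"
    hence g: "good p v" unfolding SG by (rule CollectD)
    show "v \<in> closure ?V"
    proof (cases "v = 0")
      case True
      have e0: "v = (0 - 0) * cnj (F p 0 - F p 0)" using True by simp
      have "v \<in> ?V" unfolding e0 by (rule CollectI, intro exI conjI, rule refl, rule TrueI)
      thus ?thesis by (rule closure_subset[THEN subsetD])
    next
      case False thus ?thesis by (rule approx[OF assms g])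
    qed
  qed
  show ?thesis using 1 2 by (rule subset_antisym)
qed

end
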